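(* Let $A\subset\mathbb{R}^d$ have positive reach and $1\leq k\leq d$. Then (i) $T_k(A)\cap\overline{\bigcup_{i=0}^{k-1}T_i(A)}=\emptyset$; (ii) the mapping $\psi_k^A$ is continuous on $T_k(A)$; (iii) $T_1(A)$ is closed; (iv) $T_0(A)$ is the set of all isolated points of $A$.
   Context: A set has positive reach if there is $\varepsilon>0$ such that every point at distance less than $\varepsilon$ from it has a unique nearest point in it. $\operatorname{Tan}(A,x)$ is the tangent cone ($u\in\operatorname{Tan}(A,x)$ iff $u=0$ or $r_i(x_i-x)\to u$ for some $x\neq x_i\in A$, $x_i\to x$, $r_i>0$), $\widetilde{\operatorname{Tan}}(A,x)=\operatorname{span}\operatorname{Tan}(A,x)$, $T_j(A)=\{x\in A:\dim\widetilde{\operatorname{Tan}}(A,x)=j\}$, and $\psi_k^A:T_k(A)\to G(d,k)$, $\psi_k^A(x)=\widetilde{\operatorname{Tan}}(A,x)$, where the Grassmannian $G(d,k)$ carries the metric $\rho_k(U,V)=\max\big(\sup_{u\in U,|u|=1}\mathrm{dist}(u,V),\sup_{v\in V,|v|=1}\mathrm{dist}(v,U)\big)$. *)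

theory Defs
  imports "HOL-Analysis.Analysis"
begin

definition positive_reach :: "'a::euclidean_space set \<Rightarrow> bool" where
  "positive_reach A \<longleftrightarrow> (\<exists>\<epsilon>>0. \<forall>y. (\<exists>a\<in>A. dist y a < \<epsilon>) \<longrightarrow>
      (\<exists>!a. a \<in> A \<and> (\<forall>b\<in>A. dist y a \<le> dist y b)))"

definition Tan :: "'a::euclidean_space set \<Rightarrow> 'a \<Rightarrow> 'a set" where
  "Tan A x = {u. u = 0 \<or> (\<exists>xs r. (\<forall>i. xs i \<in> A \<and> xs i \<noteq> x) \<and> xs \<longlonglongrightarrow> x
      \<and> (\<forall>i. r i > (0::real)) \<and> (\<lambda>i. r i *\<^sub>R (xs i - x)) \<longlonglongrightarrow> u)}"

definition TanSpan :: "'a::euclidean_space set \<Rightarrow> 'a \<Rightarrow> 'a set" where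
  "TanSpan A x = span (Tan A x)"

definition Tset :: "'a::euclidean_space set \<Rightarrow> nat \<Rightarrow> 'a set" where
  "Tset A j = {x \<in> A. dim (TanSpan A x) = j}"

definition psi :: "'a::euclidean_space set \<Rightarrow> 'a \<Rightarrow> 'a set" where
  "psi A x = TanSpan A x"

definition grass_dist :: "'a::euclidean_space set \<Rightarrow> 'a set \<Rightarrow> real" where
  "grass_dist U V = max (SUP u\<in>{u\<in>U. norm u = 1}. infdist u V)
                        (SUP v\<in>{v\<in>V. norm v = 1}. infdist v U)"

end

theory Submission
  imports Defs
begin



locale pr =
  fixes A :: "'a::euclidean_space set" and r :: real
  assumes closedA: "closed A" and rpos: "0 < r"
    and uniq: "\<And>y a b. infdist y A < r \<Longrightarrow> a \<in> A \<Longrightarrow> b \<in> A \<Longrightarrow>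
        dist y a = infdist y A \<Longrightarrow> dist y b = infdist y A \<Longrightarrow> a = b"
    and nonempty: "A \<noteq> {}"

lemma infdist_lt_ex:
  assumes "infdist x A < e" "A \<noteq> {}"
  shows "\<exists>a\<in>A. dist x a < e"
proof (rule ccontr)
  assume "\<not> ?thesis"
  then have "e \<le> infdist x A" unfolding infdist_def using assms(2)
    by (force intro: cINF_greatest)
  then show False using assms by simp
qed

lemma positive_reach_pr:
  assumes "positive_reach A" "A \<noteq> {}"
  obtains r where "pr A r"
proof -
  obtain e where e: "e > 0" and P: "\<And>y. (\<exists>a\<in>A. dist y a < e) \<Longrightarrow>
      (\<exists>!a. a \<in> A \<and> (\<forall>b\<in>A. dist y a \<le> dist y b))"
    using assms(1) unfolding positive_reach_def by blast
  have cl: "closed A"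
  proof -
    have "x \<in> A" if "x \<in> closure A" for x
    proof -
      have "infdist x A = 0" using in_closure_iff_infdist_zero assms(2) that by blast
      then obtain a where "a \<in> A" "dist x a < e" using infdist_lt_ex[of x A e] e assms(2) by auto
      then obtain a0 where a0: "a0 \<in> A" "\<forall>b\<in>A. dist x a0 \<le> dist x b" using P by blast
      then have "dist x a0 \<le> infdist x A" unfolding infdist_def using assms(2)
        by (auto intro: cINF_greatest)
      then have "x = a0" using \<open>infdist x A = 0\<close> by simp
      then show ?thesis using a0 by simp
    qed
    then show ?thesis using closure_subset_eq by blast
  qed
  have "pr A e"
  proof
    show "A \<noteq> {}" by fact
    show "closed A" by fact
    show "0 < e" by fact
    fix y a b assume h: "infdist y A < e" "a \<in> A" "b \<in> A" "dist y a = infdist y A" "dist y b = infdist y A"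
    have "\<forall>c\<in>A. dist y a \<le> dist y c" "\<forall>c\<in>A. dist y b \<le> dist y c"
      using h infdist_le by metis+
    moreover have "\<exists>a\<in>A. dist y a < e" using h(1,2,4) by (intro bexI[of _ a]) auto
    ultimately show "a = b" using P h by blast
  qed
  then show ?thesis using that by blast
qed

context pr begin

lemma nearest_ex: obtains p where "p \<in> A" "dist y p = infdist y A"
  using infdist_attains_inf[OF closedA nonempty] by metis

lemma proj_cont:
  assumes "infdist q A < r" "p \<in> A" "dist q p = infdist q A" "\<eta> > 0"
  obtains \<rho> where "\<rho> > 0" "\<And>y p'. dist y q < \<rho> \<Longrightarrow> p' \<in> A \<Longrightarrow> dist y p' = infdist y A \<Longrightarrow> dist p' p < \<eta>"
proof -
  define d where "d = infdist q A"
  define K where "K = (A \<inter> cball q (d+1)) - ball p \<eta>"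
  have cK: "compact K" unfolding K_def
    by (intro compact_diff compact_Int_closed[OF _ closedA, unfolded Int_commute[of _ A]] open_ball)
      (auto intro: compact_Int_closed closedA simp: Int_commute)
  have near: "dist q p' \<le> d + 2 * dist y q" if "p' \<in> A" "dist y p' = infdist y A" for y p'
  proof -
    have "dist q p' \<le> dist y q + dist y p'" by (metis dist_commute dist_triangle)
    moreover have "dist y p' \<le> d + dist y q" using that infdist_triangle[of y A q] unfolding d_def by simp
    ultimately show ?thesis by linarith
  qed
  show ?thesis
  proof (cases "K = {}")
    case True
    show ?thesis
    proof (rule that[of "1/2"])
      fix y p' assume h: "dist y q < 1/2" "p' \<in> A" "dist y p' = infdist y A"
      have "dist q p' \<le> d + 1" using near[OF h(2,3)] h(1) by linarith
      then have "p' \<in> ball p \<eta>" using True h(2) unfolding K_def by auto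
      then show "dist p' p < \<eta>" by (simp add: dist_commute)
    qed simp
  next
    case False
    obtain a0 where a0: "a0 \<in> K" "\<And>z. z \<in> K \<Longrightarrow> dist q a0 \<le> dist q z"
      using continuous_attains_inf[OF cK False, of "dist q"] continuous_on_dist[OF continuous_on_const continuous_on_id]
      by blast
    define m0 where "m0 = dist q a0"
    have "a0 \<in> A" "a0 \<notin> ball p \<eta>" using a0 unfolding K_def by auto
    have "d \<le> m0" unfolding d_def m0_def using infdist_le[OF \<open>a0 \<in> A\<close>] .
    moreover have "m0 \<noteq> d"
    proof
      assume "m0 = d"
      then have "a0 = p" using uniq[OF assms(1) \<open>a0 \<in> A\<close> assms(2)] assms(3) unfolding m0_def d_def by simp
      then show False using \<open>a0 \<notin> ball p \<eta>\<close> assms(4) by simp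
    qed
    ultimately have "d < m0" by simp
    show ?thesis
    proof (rule that[of "min (1/2) ((m0 - d)/2)"])
      show "0 < min (1/2) ((m0 - d)/2)" using \<open>d < m0\<close> by simp
      fix y p' assume h: "dist y q < min (1/2) ((m0 - d)/2)" "p' \<in> A" "dist y p' = infdist y A"
      show "dist p' p < \<eta>"
      proof (rule ccontr)
        assume "\<not> dist p' p < \<eta>"
        then have "p' \<in> K" using near[OF h(2,3)] h(1) h(2) unfolding K_def by (auto simp: dist_commute)
        then have "m0 \<le> dist q p'" using a0 unfolding m0_def by blast
        moreover have "dist y q < (m0 - d)/2" using h(1) by simp
        moreover have "2 * dist y q < m0 - d" using calculation(2) by (simp add: field_simps)
        moreover have "dist q p' \<le> d + 2 * dist y q" using near[OF h(2,3)] .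
        ultimately show False by linarith
      qed
    qed
  qed
qed

end




context pr begin

lemma ext_step:
  assumes b: "b \<in> A" and w: "norm w = 1" and s: "0 < s" and tau: "0 < \<tau>" "\<tau> \<le> s" "s + \<tau> < r"
    and hz: "infdist (b + s *\<^sub>R w) A = s"
  shows "infdist (b + (s+\<tau>) *\<^sub>R w) A = s + \<tau>"
proof -
  define z where "z = b + s *\<^sub>R w"
  obtain q where qK: "q \<in> cball z \<tau>" and qmax: "\<And>y. y \<in> cball z \<tau> \<Longrightarrow> infdist y A \<le> infdist q A"
    using continuous_attains_sup[of "cball z \<tau>" "\<lambda>y. infdist y A"] tau(1)
      continuous_on_infdist[OF continuous_on_id] by force
  define d where "d = infdist q A"
  have dzq: "dist q z \<le> \<tau>" using qK by (simp add: dist_commute)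
  have "s \<le> d" using qmax[of z] tau(1) hz unfolding d_def z_def by simp
  have "d \<le> s + \<tau>" using infdist_triangle[of q A z] hz dzq unfolding d_def z_def by simp
  then have "d < r" using tau by simp
  obtain p where p: "p \<in> A" "dist q p = d" using nearest_ex unfolding d_def by metis
  have "d > 0" using \<open>s \<le> d\<close> s by simp
  define n where "n = (1/d) *\<^sub>R (q - p)"
  have qpn: "q - p = d *\<^sub>R n" unfolding n_def using \<open>d > 0\<close> by simp
  have nn: "norm n = 1" unfolding n_def using p(2) \<open>d > 0\<close> by (simp add: dist_norm)
  have nin: "n \<bullet> n = 1" using nn by (simp add: norm_eq_1)
  define g where "g = z + \<tau> *\<^sub>R n - q"
  have g0: "g = 0"
  proof (rule ccontr)
    assume "g \<noteq> 0"
    define c where "c = z - q"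
    have gc: "g = c + \<tau> *\<^sub>R n" unfolding g_def c_def by simp
    have cc: "c \<bullet> c \<le> \<tau>\<^sup>2"
    proof -
      have "norm c \<le> \<tau>" using dzq unfolding c_def by (simp add: dist_norm norm_minus_commute)
      then have "(norm c)\<^sup>2 \<le> \<tau>\<^sup>2" using norm_ge_zero power_mono by blast
      then show ?thesis by (simp add: power2_norm_eq_inner)
    qed
    have gg: "g \<bullet> g = c \<bullet> c + 2 * \<tau> * (c \<bullet> n) + \<tau>\<^sup>2"
      unfolding gc using nin by (simp add: inner_add_left inner_add_right power2_eq_square inner_commute)
    have gn: "g \<bullet> n = c \<bullet> n + \<tau>" unfolding gc using nin by (simp add: inner_add_left)
    have "g \<bullet> g > 0" using \<open>g \<noteq> 0\<close> by simp
    have "2 * \<tau> * (g \<bullet> n) = g \<bullet> g - c \<bullet> c + \<tau>\<^sup>2" using gg gn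
      by (simp add: algebra_simps power2_eq_square)
    then have "(2 * \<tau>) * (g \<bullet> n) > 0" using \<open>g \<bullet> g > 0\<close> cc by linarith
    then have gnpos: "g \<bullet> n > 0" using tau(1) by (simp add: zero_less_mult_iff)
    define \<eta> where "\<eta> = d * (g \<bullet> n) / (norm g + 1)"
    have ng1: "norm g + 1 > 0" by (simp add: add_nonneg_pos)
    then have "\<eta> > 0" unfolding \<eta>_def using gnpos \<open>d > 0\<close> by simp
    obtain \<rho> where \<rho>: "\<rho> > 0" "\<And>y p'. dist y q < \<rho> \<Longrightarrow> p' \<in> A \<Longrightarrow> dist y p' = infdist y A \<Longrightarrow> dist p' p < \<eta>"
      using proj_cont[OF _ p(1) _ \<open>\<eta> > 0\<close>, of q] \<open>d < r\<close> p(2) unfolding d_def by blast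
    define \<epsilon> where "\<epsilon> = min 1 (\<rho> / (2 * (norm g + 1)))"
    have \<epsilon>pos: "\<epsilon> > 0" unfolding \<epsilon>_def using \<rho>(1) ng1 by simp
    have \<epsilon>1: "\<epsilon> \<le> 1" unfolding \<epsilon>_def by simp
    define y where "y = q + \<epsilon> *\<^sub>R g"
    have "dist y q < \<rho>"
    proof -
      have "dist y q = \<epsilon> * norm g" unfolding y_def using \<epsilon>pos by (simp add: dist_norm)
      also have "\<dots> \<le> (\<rho> / (2 * (norm g + 1))) * norm g"
        by (intro mult_right_mono) (auto simp: \<epsilon>_def)
      also have "\<dots> < \<rho>" using \<rho>(1) ng1 by (simp add: field_simps) (smt (verit) mult_nonneg_nonneg norm_ge_zero)
      finally show ?thesis .
    qed
    have yK: "y \<in> cball z \<tau>"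
    proof -
      have "z - y = (1 - \<epsilon>) *\<^sub>R (z - q) - \<epsilon> *\<^sub>R (\<tau> *\<^sub>R n)" unfolding y_def g_def
        by (simp add: algebra_simps)
      then have "norm (z - y) \<le> norm ((1 - \<epsilon>) *\<^sub>R (z - q)) + norm (\<epsilon> *\<^sub>R (\<tau> *\<^sub>R n))"
        using norm_triangle_ineq4 by metis
      also have "\<dots> = (1 - \<epsilon>) * norm (z - q) + \<epsilon> * \<tau>"
        using \<epsilon>pos \<epsilon>1 tau(1) nn by simp
      also have "\<dots> \<le> (1 - \<epsilon>) * \<tau> + \<epsilon> * \<tau>"
        using \<epsilon>1 \<epsilon>pos dzq by (intro add_mono mult_left_mono) (auto simp: dist_norm norm_minus_commute)
      finally show ?thesis by (simp add: dist_norm algebra_simps)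
    qed
    obtain p' where p': "p' \<in> A" "dist y p' = infdist y A" using nearest_ex by metis
    have pp': "dist p' p < \<eta>" using \<rho>(2)[OF \<open>dist y q < \<rho>\<close> p'] .
    have key: "g \<bullet> (q - p') > 0"
    proof -
      have "g \<bullet> (q - p') = g \<bullet> (q - p) + g \<bullet> (p - p')" by (simp add: inner_diff_right)
      also have "g \<bullet> (q - p) = d * (g \<bullet> n)" using qpn by simp
      finally have e1: "g \<bullet> (q - p') = d * (g \<bullet> n) + g \<bullet> (p - p')" .
      have "\<bar>g \<bullet> (p - p')\<bar> \<le> norm g * norm (p - p')" by (rule Cauchy_Schwarz_ineq2)
      also have "\<dots> \<le> norm g * \<eta>" using pp' by (intro mult_left_mono) (auto simp: dist_norm norm_minus_commute)
      also have "\<dots> < d * (g \<bullet> n)"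
        unfolding \<eta>_def using gnpos \<open>d > 0\<close>
        using ng1 by (simp add: field_simps)
      finally show ?thesis using e1 by linarith
    qed
    have yp: "y - p' = (q - p') + \<epsilon> *\<^sub>R g" unfolding y_def by simp
    have "(dist y p')\<^sup>2 = (q - p') \<bullet> (q - p') + 2 * \<epsilon> * (g \<bullet> (q - p')) + \<epsilon>\<^sup>2 * (g \<bullet> g)"
      unfolding dist_norm power2_norm_eq_inner yp
      by (simp add: inner_add_left inner_add_right inner_commute power2_eq_square)
    moreover have "(q - p') \<bullet> (q - p') = (dist q p')\<^sup>2" by (simp add: dist_norm power2_norm_eq_inner)
    moreover have "2 * \<epsilon> * (g \<bullet> (q - p')) > 0" using key \<epsilon>pos by simp
    moreover have "\<epsilon>\<^sup>2 * (g \<bullet> g) \<ge> 0" by simp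
    moreover have "d \<le> dist q p'" unfolding d_def using infdist_le[OF p'(1)] .
    note dqp = this
    moreover have "d\<^sup>2 \<le> (dist q p')\<^sup>2" using dqp \<open>d > 0\<close> by (simp add: power_mono)
    ultimately have "d\<^sup>2 < (dist y p')\<^sup>2" by linarith
    then have "d < dist y p'" using power_less_imp_less_base zero_le_dist by blast
    then show False using qmax[OF yK] p'(2) unfolding d_def by simp
  qed
  then have qz: "q = z + \<tau> *\<^sub>R n" unfolding g_def by (simp add: algebra_simps)
  have zp: "z - p = (d - \<tau>) *\<^sub>R n" using qz qpn by (simp add: algebra_simps)
  have "dist z p = d - \<tau>" using zp nn \<open>s \<le> d\<close> tau by (simp add: dist_norm)
  moreover have "d - \<tau> \<le> s"
    using infdist_triangle[of q A z] qz nn tau(1) hz unfolding d_def z_def by (simp add: dist_norm)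
  moreover have "s \<le> dist z p" using infdist_le[OF p(1), of z] hz unfolding z_def by simp
  ultimately have sd: "s = d - \<tau>" "dist z p = infdist z A" using hz unfolding z_def by auto
  have "dist z b = infdist z A" using hz w s unfolding z_def by (simp add: dist_norm)
  then have "p = b" using uniq[of z p b] sd p(1) b hz tau unfolding z_def by simp
  then have "s *\<^sub>R w = s *\<^sub>R n" using zp sd(1) unfolding z_def by simp
  then have "w = n" using s by simp
  then have "b + (s+\<tau>) *\<^sub>R w = q" using qpn sd(1) \<open>p = b\<close> by (simp add: algebra_simps)
  then show ?thesis using sd(1) unfolding d_def by simp
qed

end



lemma tan_ex:
  fixes A :: "'a::euclidean_space set"
  assumes "\<And>n. cs n \<in> A" "\<And>n. cs n \<noteq> y" "cs \<longlonglongrightarrow> y"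
  obtains \<sigma> u where "strict_mono \<sigma>"
    "(\<lambda>n. (1 / norm (cs (\<sigma> n) - y)) *\<^sub>R (cs (\<sigma> n) - y)) \<longlonglongrightarrow> u" "norm u = 1" "u \<in> Tan A y"
proof -
  define f where "f n = (1 / norm (cs n - y)) *\<^sub>R (cs n - y)" for n
  have "\<forall>n. f n \<in> sphere 0 1" unfolding f_def using assms(2) by simp
  then obtain u \<sigma> where u: "u \<in> sphere 0 1" "strict_mono \<sigma>" "(f \<circ> \<sigma>) \<longlonglongrightarrow> u"
    using seq_compactE[OF compact_imp_seq_compact[OF compact_sphere]] by metis
  have lim: "(\<lambda>n. (1 / norm (cs (\<sigma> n) - y)) *\<^sub>R (cs (\<sigma> n) - y)) \<longlonglongrightarrow> u"
    using u(3) unfolding f_def comp_def .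
  have "u \<in> Tan A y" unfolding Tan_def
  proof (intro CollectI disjI2 exI conjI allI)
    show "(cs \<circ> \<sigma>) i \<in> A" "(cs \<circ> \<sigma>) i \<noteq> y" for i using assms by auto
    show "(cs \<circ> \<sigma>) \<longlonglongrightarrow> y" using LIMSEQ_subseq_LIMSEQ[OF assms(3) u(2)] .
    show "0 < 1 / norm (cs (\<sigma> i) - y)" for i using assms(2) by simp
    show "(\<lambda>i. (1 / norm (cs (\<sigma> i) - y)) *\<^sub>R ((cs \<circ> \<sigma>) i - y)) \<longlonglongrightarrow> u" using lim by simp
  qed
  then show ?thesis using that u lim by simp
qed

lemma dual_tan:
  fixes A :: "'a::euclidean_space set"
  assumes "\<forall>u\<in>Tan A y. e \<bullet> u \<le> 0" "\<eta> > 0"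
  obtains \<rho>0 where "\<rho>0 > 0" "\<And>c. c \<in> A \<Longrightarrow> 0 < norm (c - y) \<Longrightarrow> norm (c - y) < \<rho>0 \<Longrightarrow> e \<bullet> (c - y) \<le> \<eta> * norm (c - y)"
proof (rule ccontr)
  assume "\<not> thesis"
  then have "\<forall>n. \<exists>c. c \<in> A \<and> 0 < norm (c - y) \<and> norm (c - y) < 1 / real (Suc n) \<and> e \<bullet> (c - y) > \<eta> * norm (c - y)"
    using that by (metis not_le of_nat_0_less_iff zero_less_Suc zero_less_divide_1_iff)
  then obtain cs where cs: "\<And>n. cs n \<in> A" "\<And>n. 0 < norm (cs n - y)" "\<And>n. norm (cs n - y) < 1 / real (Suc n)"
      "\<And>n. e \<bullet> (cs n - y) > \<eta> * norm (cs n - y)"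
    by metis
  have "(\<lambda>n. cs n - y) \<longlonglongrightarrow> 0" by (rule LIMSEQ_norm_0) (use cs(3) in auto)
  then have "cs \<longlonglongrightarrow> y" using Lim_null by blast
  moreover have "cs n \<noteq> y" for n using cs(2)[of n] by auto
  ultimately obtain \<sigma> u where su: "strict_mono \<sigma>"
    "(\<lambda>n. (1 / norm (cs (\<sigma> n) - y)) *\<^sub>R (cs (\<sigma> n) - y)) \<longlonglongrightarrow> u" "u \<in> Tan A y"
    using tan_ex[of cs A y] cs(1) by metis
  have "(\<lambda>n. e \<bullet> ((1 / norm (cs (\<sigma> n) - y)) *\<^sub>R (cs (\<sigma> n) - y))) \<longlonglongrightarrow> e \<bullet> u"
    by (intro tendsto_inner tendsto_const su(2))
  moreover have "\<eta> \<le> e \<bullet> ((1 / norm (cs (\<sigma> n) - y)) *\<^sub>R (cs (\<sigma> n) - y))" for n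
  proof -
    have N: "norm (cs (\<sigma> n) - y) > 0" using cs(2) by simp
    have "e \<bullet> ((1 / norm (cs (\<sigma> n) - y)) *\<^sub>R (cs (\<sigma> n) - y)) = (e \<bullet> (cs (\<sigma> n) - y)) / norm (cs (\<sigma> n) - y)"
      by (simp only: inner_scaleR_right) simp
    then show ?thesis using cs(4)[of "\<sigma> n"] N by (simp add: pos_le_divide_eq)
  qed
  ultimately have "\<eta> \<le> e \<bullet> u" by (intro tendsto_lowerbound) (auto intro: always_eventually)
  then show False using assms su(3) by force
qed

context pr begin

lemma down:
  assumes "b \<in> A" "norm w = 1" "infdist (b + s *\<^sub>R w) A = s" "0 \<le> t" "t \<le> s"
  shows "infdist (b + t *\<^sub>R w) A = t"
proof -
  have "infdist (b + s *\<^sub>R w) A \<le> infdist (b + t *\<^sub>R w) A + dist (b + s *\<^sub>R w) (b + t *\<^sub>R w)"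
    by (rule infdist_triangle)
  also have "dist (b + s *\<^sub>R w) (b + t *\<^sub>R w) = s - t"
    using assms by (simp add: dist_norm scaleR_diff_left[symmetric])
  finally have "t \<le> infdist (b + t *\<^sub>R w) A" using assms(3) by simp
  moreover have "infdist (b + t *\<^sub>R w) A \<le> t" using infdist_le[OF assms(1), of "b + t *\<^sub>R w"] assms
    by (simp add: dist_norm)
  ultimately show ?thesis by simp
qed

lemma ext_all:
  assumes b: "b \<in> A" and w: "norm w = 1" and s: "0 < s" and hs: "infdist (b + s *\<^sub>R w) A = s"
    and t: "0 \<le> t" "t < r"
  shows "infdist (b + t *\<^sub>R w) A = t"
proof -
  have ind: "infdist (b + min (s * (3/2)^n) t *\<^sub>R w) A = min (s * (3/2)^n) t" for n
  proof (induction n)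
    case 0
    show ?case
    proof (cases "t \<le> s")
      case True then show ?thesis using down[OF b w hs t(1)] by simp
    next
      case False then show ?thesis using hs by simp
    qed
  next
    case (Suc n)
    define sn where "sn = s * (3/2)^n"
    have snpos: "sn > 0" unfolding sn_def using s by simp
    have sucn: "s * (3/2)^Suc n = sn + sn/2" unfolding sn_def by simp
    show ?case
    proof (cases "t \<le> sn")
      case True
      then have "min (s * (3/2)^Suc n) t = t" "min sn t = t" using sucn snpos by auto
      then show ?thesis using Suc.IH unfolding sn_def by simp
    next
      case False
      then have ih: "infdist (b + sn *\<^sub>R w) A = sn" using Suc.IH unfolding sn_def by simp
      define \<tau> where "\<tau> = min (sn/2) (t - sn)"
      have "0 < \<tau>" "\<tau> \<le> sn" "sn + \<tau> < r" unfolding \<tau>_def using False snpos t by auto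
      from ext_step[OF b w snpos this ih]
      have "infdist (b + (sn + \<tau>) *\<^sub>R w) A = sn + \<tau>" .
      moreover have "sn + \<tau> = min (s * (3/2)^Suc n) t" unfolding sucn \<tau>_def using False by auto
      ultimately show ?thesis by simp
    qed
  qed
  obtain n where "t / s < (3/2::real)^n" using real_arch_pow[of "3/2" "t/s"] by auto
  then have "t < s * (3/2)^n" using s by (simp add: field_simps)
  then show ?thesis using ind[of n] by simp
qed

end



lemma norm_add_unit:
  fixes a e :: "'a::real_inner"
  assumes "norm e = 1"
  shows "(norm (a + t *\<^sub>R e))\<^sup>2 = (norm a)\<^sup>2 + 2 * t * (e \<bullet> a) + t\<^sup>2"
proof -
  have ee: "e \<bullet> e = 1" using assms by (simp add: norm_eq_1)
  show ?thesis unfolding power2_norm_eq_inner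
    by (simp add: inner_add_left inner_add_right ee inner_commute power2_eq_square algebra_simps)
qed

context pr begin

lemma normal_ball:
  assumes y: "y \<in> A" and e: "norm e = 1" and dual: "\<forall>u\<in>Tan A y. e \<bullet> u \<le> 0"
  shows "infdist (y + (r/2) *\<^sub>R e) A = r/2"
proof -
  define \<rho> where "\<rho> = r/2"
  have \<rho>: "0 < \<rho>" "\<rho> < r" unfolding \<rho>_def using rpos by auto
  have le: "infdist (y + \<rho> *\<^sub>R e) A \<le> \<rho>" using infdist_le[OF y, of "y + \<rho> *\<^sub>R e"] e \<rho> by (simp add: dist_norm)
  have ge: "\<rho> \<le> infdist (y + \<rho> *\<^sub>R e) A + \<epsilon>'" if "\<epsilon>' > 0" for \<epsilon>'
  proof -
    define \<eta> where "\<eta> = min (1/4) (\<epsilon>' / (10 * \<rho>))"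
    have \<eta>: "\<eta> > 0" "\<eta> \<le> 1/4" unfolding \<eta>_def using that \<rho> by auto
    have "\<eta> \<le> \<epsilon>' / (10 * \<rho>)" unfolding \<eta>_def by simp
    then have "10 * \<rho> * \<eta> \<le> 10 * \<rho> * (\<epsilon>' / (10 * \<rho>))" using \<rho> by (intro mult_left_mono) auto
    then have \<eta>3: "10 * \<rho> * \<eta> \<le> \<epsilon>'" using \<rho> by simp
    obtain \<rho>0 where \<rho>0: "\<rho>0 > 0" "\<And>c. c \<in> A \<Longrightarrow> 0 < norm (c - y) \<Longrightarrow> norm (c - y) < \<rho>0 \<Longrightarrow> e \<bullet> (c - y) \<le> \<eta> * norm (c - y)"
      using dual_tan[OF dual \<eta>(1)] by metis
    define s where "s = min (\<rho>0/3) \<rho>"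
    have s: "0 < s" "s \<le> \<rho>" "2 * s < \<rho>0" unfolding s_def using \<rho>0 \<rho> by auto
    define z where "z = y + s *\<^sub>R e"
    obtain b where b: "b \<in> A" "dist z b = infdist z A" using nearest_ex by metis
    have zb: "norm (z - b) \<le> s" using b infdist_le[OF y, of z] e s unfolding z_def by (simp add: dist_norm)
    have zb2: "norm (z - b) = infdist z A" using b by (simp add: dist_norm)
    have by2: "norm (b - y) \<le> 2 * s"
    proof -
      have "b - y = (z - y) - (z - b)" by simp
      then have "norm (b - y) \<le> norm (z - y) + norm (z - b)" by (metis norm_triangle_ineq4)
      then show ?thesis using zb e s unfolding z_def by simp
    qed
    have ineq: "(norm (b - y))\<^sup>2 \<le> 2 * s * (e \<bullet> (b - y))"
    proof -
      have zbeq: "z - b = (y - b) + s *\<^sub>R e" unfolding z_def by simp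
      have "(norm (z - b))\<^sup>2 = (norm (y - b))\<^sup>2 + 2 * s * (e \<bullet> (y - b)) + s\<^sup>2"
        unfolding zbeq by (rule norm_add_unit[OF e])
      moreover have "(norm (y - b))\<^sup>2 = (norm (b - y))\<^sup>2" by (simp add: norm_minus_commute)
      moreover have "e \<bullet> (y - b) = - (e \<bullet> (b - y))" by (simp add: inner_diff_right)
      ultimately have "(norm (z - b))\<^sup>2 = s\<^sup>2 - 2 * s * (e \<bullet> (b - y)) + (norm (b - y))\<^sup>2" by simp
      moreover have "(norm (z - b))\<^sup>2 \<le> s\<^sup>2" using zb by (simp add: power_mono)
      ultimately show ?thesis by linarith
    qed
    have byb: "norm (b - y) \<le> 2 * s * \<eta>"
    proof (cases "b = y")
      case False
      then have "e \<bullet> (b - y) \<le> \<eta> * norm (b - y)" using \<rho>0(2)[OF b(1)] by2 s by simp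
      then have "(norm (b - y))\<^sup>2 \<le> 2 * s * (\<eta> * norm (b - y))" using ineq s
        by (smt (verit, ccfv_SIG) mult_left_mono)
      then have "norm (b - y) * norm (b - y) \<le> (2 * s * \<eta>) * norm (b - y)"
        by (simp add: power2_eq_square algebra_simps)
      then show ?thesis using False by simp
    qed (use \<eta> s in simp)
    define w where "w = z - b"
    define dz where "dz = norm w"
    have wse: "norm (w - s *\<^sub>R e) \<le> 2 * s * \<eta>"
    proof -
      have "w - s *\<^sub>R e = -(b - y)" unfolding w_def z_def by simp
      then show ?thesis using byb by (simp only: norm_minus_cancel)
    qed
    have dzs: "\<bar>dz - s\<bar> \<le> 2 * s * \<eta>"
    proof -
      have "\<bar>norm w - norm (s *\<^sub>R e)\<bar> \<le> norm (w - s *\<^sub>R e)" by (rule norm_triangle_ineq3)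
      then show ?thesis using wse e s unfolding dz_def by simp
    qed
    have "2 * s * \<eta> \<le> 2 * s * (1/4)" using \<eta> s by (intro mult_left_mono) auto
    then have dzpos: "dz \<ge> s/2" using dzs by linarith
    then have dz0: "dz > 0" using s by simp
    define n where "n = (1/dz) *\<^sub>R w"
    have nn: "norm n = 1" unfolding n_def dz_def using dz0 unfolding dz_def by simp
    have bz: "b + dz *\<^sub>R n = z" unfolding n_def w_def using dz0 by simp
    have "infdist (b + dz *\<^sub>R n) A = dz" using bz zb2 unfolding dz_def w_def by simp
    from ext_all[OF b(1) nn dz0 this, of \<rho>] \<rho>
    have bn: "infdist (b + \<rho> *\<^sub>R n) A = \<rho>" by simp
    have ne: "norm (n - e) \<le> 8 * \<eta>"
    proof -
      have "n - e = (1/dz) *\<^sub>R (w - dz *\<^sub>R e)" unfolding n_def using dz0 by (simp add: algebra_simps)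
      then have "norm (n - e) = norm (w - dz *\<^sub>R e) / dz" using dz0 by simp
      moreover have "norm (w - dz *\<^sub>R e) \<le> 4 * s * \<eta>"
      proof -
        have "w - dz *\<^sub>R e = (w - s *\<^sub>R e) + (s - dz) *\<^sub>R e" by (simp add: algebra_simps)
        then have "norm (w - dz *\<^sub>R e) \<le> norm (w - s *\<^sub>R e) + norm ((s - dz) *\<^sub>R e)" by (metis norm_triangle_ineq)
        also have "norm ((s - dz) *\<^sub>R e) = \<bar>dz - s\<bar>" using e by simp
        finally show ?thesis using wse dzs by simp
      qed
      ultimately have "norm (n - e) \<le> 4 * s * \<eta> / dz" using dz0 by (simp add: divide_right_mono)
      also have "\<dots> \<le> 4 * s * \<eta> / (s/2)" using dzpos s \<eta> by (intro divide_left_mono) auto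
      also have "\<dots> = 8 * \<eta>" using s by simp
      finally show ?thesis .
    qed
    have "\<rho> \<le> infdist (y + \<rho> *\<^sub>R e) A + dist (b + \<rho> *\<^sub>R n) (y + \<rho> *\<^sub>R e)"
      using infdist_triangle[of "b + \<rho> *\<^sub>R n" A "y + \<rho> *\<^sub>R e"] bn by simp
    moreover have "dist (b + \<rho> *\<^sub>R n) (y + \<rho> *\<^sub>R e) \<le> 2 * s * \<eta> + \<rho> * (8 * \<eta>)"
    proof -
      have "(b + \<rho> *\<^sub>R n) - (y + \<rho> *\<^sub>R e) = (b - y) + \<rho> *\<^sub>R (n - e)" by (simp add: algebra_simps)
      then have "dist (b + \<rho> *\<^sub>R n) (y + \<rho> *\<^sub>R e) \<le> norm (b - y) + norm (\<rho> *\<^sub>R (n - e))"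
        by (metis dist_norm norm_triangle_ineq)
      also have "norm (\<rho> *\<^sub>R (n - e)) = \<rho> * norm (n - e)" using \<rho> by simp
      finally show ?thesis using byb ne \<rho> by (smt (verit) mult_left_mono)
    qed
    moreover have "2 * s * \<eta> + \<rho> * (8 * \<eta>) \<le> \<epsilon>'"
    proof -
      have "s * \<eta> \<le> \<rho> * \<eta>" using s \<eta> by (intro mult_right_mono) auto
      then show ?thesis using \<eta>3 by linarith
    qed
    ultimately show ?thesis by linarith
  qed
  have "\<rho> \<le> infdist (y + \<rho> *\<^sub>R e) A" by (rule field_le_epsilon) (use ge in auto)
  then show ?thesis using le unfolding \<rho>_def by simp
qed

lemma normal_ineq:
  assumes y: "y \<in> A" and e: "norm e = 1" and dual: "\<forall>u\<in>Tan A y. e \<bullet> u \<le> 0" and c: "c \<in> A"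
  shows "e \<bullet> (c - y) \<le> (norm (c - y))\<^sup>2 / r"
proof -
  have "r/2 \<le> dist (y + (r/2) *\<^sub>R e) c" using normal_ball[OF y e dual] infdist_le[OF c] by metis
  moreover have "y + (r/2) *\<^sub>R e - c = (y - c) + (r/2) *\<^sub>R e" by simp
  ultimately have "(r/2)\<^sup>2 \<le> (norm ((y - c) + (r/2) *\<^sub>R e))\<^sup>2"
    using rpos by (simp add: dist_norm power_mono)
  also have "\<dots> = (norm (y - c))\<^sup>2 + 2 * (r/2) * (e \<bullet> (y - c)) + (r/2)\<^sup>2"
    using norm_add_unit[OF e] .
  also have "(norm (y - c))\<^sup>2 = (norm (c - y))\<^sup>2" by (simp add: norm_minus_commute)
  also have "e \<bullet> (y - c) = - (e \<bullet> (c - y))" by (simp add: inner_diff_right)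
  finally have "r * (e \<bullet> (c - y)) \<le> (norm (c - y))\<^sup>2" by simp
  then show ?thesis using rpos by (simp add: pos_le_divide_eq mult.commute)
qed

end



lemma orth_exists:
  fixes S L :: "'a::euclidean_space set"
  assumes "dim L < dim S"
  obtains e where "e \<in> span S" "e \<noteq> 0" "\<forall>l\<in>L. e \<bullet> l = 0"
proof -
  define P where "P = {y. \<forall>x\<in>span L. orthogonal x y}"
  have sP: "subspace P" unfolding P_def by (rule subspace_orthogonal_to_vectors)
  have "dim {y \<in> UNIV. \<forall>x\<in>span L. orthogonal x y} + dim (span L) = dim (UNIV :: 'a set)"
    by (rule dim_subspace_orthogonal_to_vectors) (auto simp: subspace_span)
  then have dP: "dim P + dim L = DIM('a)" unfolding P_def by simp
  have "dim {x + y |x y. x \<in> span S \<and> y \<in> P} + dim (span S \<inter> P) = dim (span S) + dim P"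
    by (rule dim_sums_Int) (auto simp: subspace_span sP)
  moreover have "dim {x + y |x y. x \<in> span S \<and> y \<in> P} \<le> DIM('a)" by (rule dim_subset_UNIV)
  ultimately have "dim (span S \<inter> P) > 0" using dP assms by simp
  have "\<not> (span S \<inter> P \<subseteq> {0})"
  proof
    assume "span S \<inter> P \<subseteq> {0}"
    then have "dim (span S \<inter> P) = 0" by simp
    with \<open>dim (span S \<inter> P) > 0\<close> show False by simp
  qed
  then obtain e where "e \<in> span S \<inter> P" "e \<noteq> 0" by blast
  moreover have "\<forall>l\<in>L. e \<bullet> l = 0"
  proof
    fix l assume "l \<in> L"
    then have "l \<in> span L" by (rule span_base)
    then have "orthogonal l e" using calculation(1) unfolding P_def by blast
    then show "e \<bullet> l = 0" by (simp add: orthogonal_def inner_commute)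
  qed
  ultimately show ?thesis using that by blast
qed

lemma mbound:
  fixes B :: "'a::euclidean_space set"
  assumes "finite B"
  obtains m where "m > 0" "\<And>z. z \<in> span B \<Longrightarrow> m * norm z \<le> (\<Sum>u\<in>B. \<bar>u \<bullet> z\<bar>)"
proof -
  define f where "f z = (\<Sum>u\<in>B. \<bar>u \<bullet> z\<bar>)" for z :: 'a
  define K where "K = span B \<inter> sphere 0 1"
  show ?thesis
  proof (cases "K = {}")
    case True
    have "z = 0" if "z \<in> span B" for z
    proof (rule ccontr)
      assume "z \<noteq> 0"
      then have "(1 / norm z) *\<^sub>R z \<in> K" unfolding K_def using that by (simp add: span_mul)
      then show False using True by simp
    qed
    show ?thesis
    proof (rule that[of 1])
      fix z assume "z \<in> span B"
      then have "z = 0" by fact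
      then show "1 * norm z \<le> (\<Sum>u\<in>B. \<bar>u \<bullet> z\<bar>)" by simp
    qed simp
  next
    case False
    have cK: "compact K" unfolding K_def
      by (simp add: closed_subspace compact_Int_closed compact_sphere subspace_span Int_commute[of "span B"]
          closed_Int_compact)
    have cf: "continuous_on K f" unfolding f_def by (intro continuous_intros)
    obtain z0 where z0: "z0 \<in> K" "\<And>z. z \<in> K \<Longrightarrow> f z0 \<le> f z"
      using continuous_attains_inf[OF cK False cf] by blast
    have "f z0 > 0"
    proof (rule ccontr)
      assume "\<not> f z0 > 0"
      then have "f z0 = 0" unfolding f_def by (smt (verit) abs_ge_zero sum_nonneg)
      then have "\<forall>u\<in>B. u \<bullet> z0 = 0" unfolding f_def using assms by (simp add: sum_nonneg_eq_0_iff)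
      moreover have "z0 \<in> span B" using z0(1) unfolding K_def by simp
      ultimately have "orthogonal z0 z0"
        by (intro orthogonal_to_span[of z0 B z0]) (auto simp: orthogonal_def inner_commute)
      then show False using z0(1) unfolding K_def by (simp add: orthogonal_def)
    qed
    show ?thesis
    proof (rule that[of "f z0"])
      show "f z0 > 0" by fact
      fix z assume z: "z \<in> span B"
      show "f z0 * norm z \<le> (\<Sum>u\<in>B. \<bar>u \<bullet> z\<bar>)"
      proof (cases "z = 0")
        case True then show ?thesis by simp
      next
        case False
        then have "(1 / norm z) *\<^sub>R z \<in> K" unfolding K_def using z by (simp add: span_mul)
        then have "f z0 \<le> f ((1 / norm z) *\<^sub>R z)" using z0 by blast
        also have "f ((1 / norm z) *\<^sub>R z) = f z / norm z" unfolding f_def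
          by (simp add: sum_divide_distrib abs_mult)
        finally show ?thesis using False unfolding f_def by (simp add: pos_le_divide_eq)
      qed
    qed
  qed
qed

lemma comp_bound:
  fixes B :: "'a::euclidean_space set" and \<theta> :: real
  assumes "finite B" "m > 0" "\<And>z. z \<in> span B \<Longrightarrow> m * norm z \<le> (\<Sum>u\<in>B. \<bar>u \<bullet> z\<bar>)"
    and "\<forall>u\<in>B. \<bar>u \<bullet> e\<bar> \<le> \<theta>" and "z \<in> span B"
  shows "\<bar>z \<bullet> e\<bar> \<le> norm z * (real (card B) * \<theta> / m)"
proof -
  obtain e1 e2 where e: "e1 \<in> span B" "\<And>w. w \<in> span B \<Longrightarrow> orthogonal e2 w" "e = e1 + e2"
    using orthogonal_subspace_decomp_exists by metis
  have ue: "u \<bullet> e = u \<bullet> e1" if "u \<in> span B" for u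
    using e(2)[OF that] e(3) by (simp add: inner_add_right orthogonal_def inner_commute)
  have "m * norm e1 \<le> (\<Sum>u\<in>B. \<bar>u \<bullet> e1\<bar>)" using assms(3)[OF e(1)] .
  also have "\<dots> = (\<Sum>u\<in>B. \<bar>u \<bullet> e\<bar>)" using ue by (simp add: span_base)
  also have "\<dots> \<le> (\<Sum>u\<in>B. \<theta>)" using assms(4) by (intro sum_mono) auto
  also have "\<dots> = real (card B) * \<theta>" by simp
  finally have "norm e1 \<le> real (card B) * \<theta> / m" using assms(2) by (simp add: pos_le_divide_eq mult.commute)
  moreover have "\<bar>z \<bullet> e\<bar> = \<bar>z \<bullet> e1\<bar>" using ue[OF assms(5)] by simp
  moreover have "\<bar>z \<bullet> e1\<bar> \<le> norm z * norm e1" by (rule Cauchy_Schwarz_ineq2)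
  ultimately show ?thesis by (smt (verit) mult_left_mono norm_ge_zero)
qed




context pr begin

lemma core_single:
  assumes x: "x \<in> A" and u: "u \<in> Tan A x" and \<theta>: "\<theta> > 0"
  shows "eventually (\<lambda>y. y \<in> A \<longrightarrow> (\<forall>e. norm e = 1 \<longrightarrow> (\<forall>l\<in>Tan A y. e \<bullet> l = 0) \<longrightarrow> \<bar>u \<bullet> e\<bar> \<le> \<theta>)) (nhds x)"
proof (cases "u = 0")
  case True then show ?thesis using \<theta> by simp
next
  case False
  then obtain xs rr where xs: "\<forall>i. xs i \<in> A \<and> xs i \<noteq> x" "xs \<longlonglongrightarrow> x" "\<forall>i. rr i > (0::real)"
      "(\<lambda>i. rr i *\<^sub>R (xs i - x)) \<longlonglongrightarrow> u"
  proof -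
    have "u = 0 \<or> (\<exists>xs r. (\<forall>i. xs i \<in> A \<and> xs i \<noteq> x) \<and> xs \<longlonglongrightarrow> x
      \<and> (\<forall>i. r i > (0::real)) \<and> (\<lambda>i. r i *\<^sub>R (xs i - x)) \<longlonglongrightarrow> u)"
      using u unfolding Tan_def by (rule CollectD)
    with False show ?thesis using that by blast
  qed
  define h where "h = \<theta> * r / (12 * (norm u + \<theta>))"
  have h: "h > 0" unfolding h_def using \<theta> rpos by (simp add: add_nonneg_pos)
  obtain N1 where N1: "\<And>n. n \<ge> N1 \<Longrightarrow> dist (rr n *\<^sub>R (xs n - x)) u < \<theta>/3"
    using xs(4)[unfolded lim_sequentially, rule_format, of "\<theta>/3"] \<theta> by auto
  obtain N2 where N2: "\<And>n. n \<ge> N2 \<Longrightarrow> dist (xs n) x < h"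
    using xs(2)[unfolded lim_sequentially, rule_format, OF h] by auto
  define c where "c = xs (max N1 N2)"
  define l where "l = rr (max N1 N2)"
  have c: "c \<in> A" "c \<noteq> x" unfolding c_def using xs(1) by auto
  have l: "l > 0" unfolding l_def using xs(3) by auto
  have A1: "norm (u - l *\<^sub>R (c - x)) < \<theta>/3" using N1[of "max N1 N2"] unfolding c_def l_def
    by (simp add: dist_norm norm_minus_commute)
  have cx: "norm (c - x) < h" using N2[of "max N1 N2"] unfolding c_def by (simp add: dist_norm)
  have lcx: "l * norm (c - x) \<le> norm u + \<theta>"
  proof -
    have "norm (l *\<^sub>R (c - x)) \<le> norm u + norm (l *\<^sub>R (c - x) - u)"
      by (rule norm_triangle_sub)
    moreover have "norm (l *\<^sub>R (c - x) - u) = norm (u - l *\<^sub>R (c - x))" by (rule norm_minus_commute)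
    moreover have "norm (l *\<^sub>R (c - x)) = l * norm (c - x)" using l by simp
    ultimately show ?thesis using A1 \<theta> by linarith
  qed
  define \<delta> where "\<delta> = min (norm (c - x)) (\<theta> / (3 * l))"
  have \<delta>: "\<delta> > 0" unfolding \<delta>_def using c(2) l \<theta> by simp
  show ?thesis unfolding eventually_nhds_metric
  proof (intro exI[of _ \<delta>] conjI allI impI \<delta>)
    fix y e assume y: "dist y x < \<delta>" "y \<in> A" and e: "norm e = 1" and orth: "\<forall>l\<in>Tan A y. e \<bullet> l = 0"
    have d1: "\<forall>u\<in>Tan A y. e \<bullet> u \<le> 0" using orth by simp
    have d2: "\<forall>u\<in>Tan A y. (- e) \<bullet> u \<le> 0" using orth by simp
    have n2: "norm (- e) = 1" using e by simp
    have ecy: "\<bar>e \<bullet> (c - y)\<bar> \<le> (norm (c - y))\<^sup>2 / r"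
      using normal_ineq[OF y(2) e d1 c(1)] normal_ineq[OF y(2) n2 d2 c(1)] by simp
    have yx: "norm (y - x) < norm (c - x)" "norm (y - x) < \<theta> / (3 * l)" using y(1) unfolding \<delta>_def
      by (auto simp: dist_norm)
    have cy: "norm (c - y) \<le> 2 * norm (c - x)"
    proof -
      have "c - y = (c - x) - (y - x)" by simp
      then have "norm (c - y) \<le> norm (c - x) + norm (y - x)" by (metis norm_triangle_ineq4)
      then show ?thesis using yx by simp
    qed
    have A2: "l * ((norm (c - y))\<^sup>2 / r) \<le> \<theta>/3"
    proof -
      have "(norm (c - y))\<^sup>2 \<le> (2 * norm (c - x))\<^sup>2" by (rule power_mono[OF cy norm_ge_zero])
      then have "l * (norm (c - y))\<^sup>2 \<le> l * (4 * (norm (c - x) * norm (c - x)))" using l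
        by (simp add: power2_eq_square)
      also have "\<dots> = 4 * (l * norm (c - x)) * norm (c - x)" by simp
      also have "\<dots> \<le> 4 * (norm u + \<theta>) * h"
        using lcx cx l \<theta> by (intro mult_mono) auto
      also have "\<dots> = \<theta> * r / 3"
      proof -
        have pos: "norm u + \<theta> > 0" using \<theta> by (simp add: add_nonneg_pos)
        then show ?thesis unfolding h_def by (simp add: field_simps)
      qed
      finally show ?thesis using rpos by (simp add: field_simps)
    qed
    have A3: "l * norm (y - x) < \<theta>/3" using yx(2) l by (simp add: field_simps)
    have "u \<bullet> e = (u - l *\<^sub>R (c - x)) \<bullet> e + l * ((c - y) \<bullet> e) + l * ((y - x) \<bullet> e)"
      by (simp add: inner_diff_left algebra_simps)
    moreover have "\<bar>(u - l *\<^sub>R (c - x)) \<bullet> e + l * ((c - y) \<bullet> e) + l * ((y - x) \<bullet> e)\<bar>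
        \<le> \<bar>(u - l *\<^sub>R (c - x)) \<bullet> e + l * ((c - y) \<bullet> e)\<bar> + \<bar>l * ((y - x) \<bullet> e)\<bar>" by (rule abs_triangle_ineq)
    moreover have "\<bar>(u - l *\<^sub>R (c - x)) \<bullet> e + l * ((c - y) \<bullet> e)\<bar>
        \<le> \<bar>(u - l *\<^sub>R (c - x)) \<bullet> e\<bar> + \<bar>l * ((c - y) \<bullet> e)\<bar>" by (rule abs_triangle_ineq)
    moreover have "\<bar>l * ((c - y) \<bullet> e)\<bar> = l * \<bar>(c - y) \<bullet> e\<bar>" using l by (simp add: abs_mult)
    moreover have "\<bar>l * ((y - x) \<bullet> e)\<bar> = l * \<bar>(y - x) \<bullet> e\<bar>" using l by (simp add: abs_mult)
    moreover have "\<bar>(u - l *\<^sub>R (c - x)) \<bullet> e\<bar> \<le> norm (u - l *\<^sub>R (c - x))"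
      using Cauchy_Schwarz_ineq2[of "u - l *\<^sub>R (c - x)" e] e by simp
    moreover have "l * \<bar>(y - x) \<bullet> e\<bar> \<le> l * norm (y - x)"
      using Cauchy_Schwarz_ineq2[of "y - x" e] e l by (intro mult_left_mono) auto
    moreover have "l * \<bar>(c - y) \<bullet> e\<bar> \<le> l * ((norm (c - y))\<^sup>2 / r)" using ecy l
      by (intro mult_left_mono) (auto simp: inner_commute)
    ultimately have "\<bar>u \<bullet> e\<bar> \<le> norm (u - l *\<^sub>R (c - x)) + l * ((norm (c - y))\<^sup>2 / r) + l * norm (y - x)"
      by linarith
    then show "\<bar>u \<bullet> e\<bar> \<le> \<theta>" using A1 A2 A3 by linarith
  qed
qed

lemma core:
  assumes x: "x \<in> A" and B: "finite B" "B \<subseteq> Tan A x" and \<theta>: "\<theta> > 0"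
  obtains \<delta> where "\<delta> > 0" "\<And>y e. y \<in> A \<Longrightarrow> dist y x < \<delta> \<Longrightarrow> norm e = 1 \<Longrightarrow> (\<forall>l\<in>Tan A y. e \<bullet> l = 0) \<Longrightarrow>
      \<forall>u\<in>B. \<bar>u \<bullet> e\<bar> \<le> \<theta>"
proof -
  have "eventually (\<lambda>y. \<forall>u\<in>B. y \<in> A \<longrightarrow> (\<forall>e. norm e = 1 \<longrightarrow> (\<forall>l\<in>Tan A y. e \<bullet> l = 0) \<longrightarrow> \<bar>u \<bullet> e\<bar> \<le> \<theta>)) (nhds x)"
    using core_single[OF x _ \<theta>] B by (intro eventually_ball_finite) auto
  then obtain \<delta> where "\<delta> > 0" "\<And>y. dist y x < \<delta> \<Longrightarrow> \<forall>u\<in>B. y \<in> A \<longrightarrow> (\<forall>e. norm e = 1 \<longrightarrow> (\<forall>l\<in>Tan A y. e \<bullet> l = 0) \<longrightarrow> \<bar>u \<bullet> e\<bar> \<le> \<theta>)"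
    unfolding eventually_nhds_metric by blast
  then show ?thesis using that by blast
qed

end



lemma tan_basis:
  fixes A :: "'a::euclidean_space set"
  obtains B where "B \<subseteq> Tan A x" "independent B" "finite B" "span B = TanSpan A x"
    "card B = dim (TanSpan A x)"
proof -
  obtain B where B: "B \<subseteq> Tan A x" "independent B" "Tan A x \<subseteq> span B" "card B = dim (Tan A x)"
    using basis_exists by metis
  have "span B = span (Tan A x)"
  proof
    show "span B \<subseteq> span (Tan A x)" using B(1) by (rule span_mono)
    show "span (Tan A x) \<subseteq> span B" using B(3) by (metis span_mono span_span)
  qed
  show ?thesis
    by (rule that[of B]) (use B \<open>span B = span (Tan A x)\<close> finiteI_independent[OF B(2)] in \<open>simp_all add: TanSpan_def\<close>)
qed

lemma tset0:
  fixes A :: "'a::euclidean_space set"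
  shows "Tset A 0 = {x \<in> A. \<not> x islimpt A}"
proof -
  have "dim (TanSpan A x) = 0 \<longleftrightarrow> \<not> x islimpt A" if "x \<in> A" for x
  proof -
    have "dim (TanSpan A x) = 0 \<longleftrightarrow> Tan A x \<subseteq> {0}" unfolding TanSpan_def by simp
    also have "\<dots> \<longleftrightarrow> \<not> x islimpt A"
    proof
      assume T: "Tan A x \<subseteq> {0}"
      show "\<not> x islimpt A"
      proof
        assume "x islimpt A"
        then obtain f where f: "\<forall>n. f n \<in> A - {x}" "f \<longlonglongrightarrow> x" unfolding islimpt_sequential by blast
        obtain \<sigma> u where "norm u = 1" "u \<in> Tan A x"
          using tan_ex[of f A x] f by blast
        then show False using T by auto
      qed
    next
      assume nl: "\<not> x islimpt A"
      show "Tan A x \<subseteq> {0}"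
      proof
        fix u assume "u \<in> Tan A x"
        show "u \<in> {0}"
        proof (rule ccontr)
          assume "u \<notin> {0}"
          then obtain xs where "\<forall>i. xs i \<in> A \<and> xs i \<noteq> x" "xs \<longlonglongrightarrow> x"
            using \<open>u \<in> Tan A x\<close> unfolding Tan_def by auto
          then have "x islimpt A" unfolding islimpt_sequential by (intro exI[of _ xs]) auto
          then show False using nl by simp
        qed
      qed
    qed
    finally show ?thesis .
  qed
  then show ?thesis unfolding Tset_def by auto
qed

context pr begin

lemma part1:
  assumes x: "x \<in> Tset A k"
  shows "x \<notin> closure (\<Union>i<k. Tset A i)"
proof
  assume xcl: "x \<in> closure (\<Union>i<k. Tset A i)"
  have xA: "x \<in> A" and dk: "dim (TanSpan A x) = k" using x unfolding Tset_def by auto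
  obtain B where B: "B \<subseteq> Tan A x" "independent B" "finite B" "span B = TanSpan A x" "card B = k"
    using tan_basis[of A x] dk by metis
  have "k \<noteq> 0"
  proof
    assume "k = 0"
    then show False using xcl by simp
  qed
  obtain m where m: "m > 0" "\<And>z. z \<in> span B \<Longrightarrow> m * norm z \<le> (\<Sum>u\<in>B. \<bar>u \<bullet> z\<bar>)"
    using mbound[OF B(3)] by metis
  define \<theta> where "\<theta> = m / (2 * real k)"
  have \<theta>: "\<theta> > 0" unfolding \<theta>_def using m \<open>k \<noteq> 0\<close> by simp
  obtain \<delta> where \<delta>: "\<delta> > 0" "\<And>y e. y \<in> A \<Longrightarrow> dist y x < \<delta> \<Longrightarrow> norm e = 1 \<Longrightarrow> (\<forall>l\<in>Tan A y. e \<bullet> l = 0) \<Longrightarrow>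
      \<forall>u\<in>B. \<bar>u \<bullet> e\<bar> \<le> \<theta>"
    using core[OF xA B(3) B(1) \<theta>] by metis
  obtain y where y: "y \<in> (\<Union>i<k. Tset A i)" "dist y x < \<delta>" using xcl \<delta>(1) unfolding closure_approachable by metis
  then obtain j where j: "j < k" "y \<in> A" "dim (TanSpan A y) = j" unfolding Tset_def by auto
  have "dim (Tan A y) < dim B" using j B(2,5) dim_eq_card_independent[of B] unfolding TanSpan_def by simp
  then obtain e0 where e0: "e0 \<in> span B" "e0 \<noteq> 0" "\<forall>l\<in>Tan A y. e0 \<bullet> l = 0"
    using orth_exists by metis
  define e where "e = (1 / norm e0) *\<^sub>R e0"
  have e: "norm e = 1" "e \<in> span B" "\<forall>l\<in>Tan A y. e \<bullet> l = 0"
    unfolding e_def using e0 by (auto simp: span_mul)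
  have "\<forall>u\<in>B. \<bar>u \<bullet> e\<bar> \<le> \<theta>" using \<delta>(2)[OF j(2) y(2) e(1) e(3)] .
  then have "(\<Sum>u\<in>B. \<bar>u \<bullet> e\<bar>) \<le> (\<Sum>u\<in>B. \<theta>)" by (intro sum_mono) auto
  also have "\<dots> = real k * \<theta>" using B(5) by simp
  also have "\<dots> = m / 2" unfolding \<theta>_def using \<open>k \<noteq> 0\<close> by simp
  finally have "m \<le> m / 2" using m(2)[OF e(2)] e(1) by simp
  then show False using m(1) by simp
qed

lemma part3: "closed (Tset A 1)"
  unfolding closed_limpt
proof (intro allI impI)
  fix x assume xl: "x islimpt Tset A 1"
  have "Tset A 1 \<subseteq> A" unfolding Tset_def by auto
  then have "x islimpt A" using xl islimpt_subset by blast
  then have xA: "x \<in> A" using closedA closed_limpt by blast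
  define j where "j = dim (TanSpan A x)"
  have xj: "x \<in> Tset A j" unfolding Tset_def j_def using xA by simp
  have "j \<noteq> 0"
  proof
    assume "j = 0"
    then show False using xj \<open>x islimpt A\<close> tset0[of A] by auto
  qed
  moreover have "\<not> j \<ge> 2"
  proof
    assume "j \<ge> 2"
    then have "Tset A 1 \<subseteq> (\<Union>i<j. Tset A i)" by (intro subsetI UN_I[of 1]) auto
    then have "x islimpt (\<Union>i<j. Tset A i)" using xl islimpt_subset by blast
    then have "x \<in> closure (\<Union>i<j. Tset A i)" unfolding closure_def by simp
    then show False using part1[OF xj] by simp
  qed
  ultimately have "j = 1" by simp
  then show "x \<in> Tset A 1" using xj by simp
qed

end



lemma unit_in_span:
  fixes S :: "'a::euclidean_space set"
  assumes "dim S \<ge> 1"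
  shows "{u \<in> span S. norm u = 1} \<noteq> {}"
proof -
  have "\<not> span S \<subseteq> {0}"
  proof
    assume "span S \<subseteq> {0}"
    then have "S \<subseteq> {0}" using span_superset by blast
    then have "dim S = 0" by simp
    then show False using assms by linarith
  qed
  then obtain v where "v \<in> span S" "v \<noteq> 0" by blast
  then have "(1 / norm v) *\<^sub>R v \<in> {u \<in> span S. norm u = 1}" by (simp add: span_mul)
  then show ?thesis by blast
qed

context pr begin

lemma part2:
  assumes x: "x \<in> Tset A k" and k1: "1 \<le> k" and \<epsilon>: "\<epsilon> > 0"
  shows "\<exists>\<delta>>0. \<forall>y\<in>Tset A k. dist y x < \<delta> \<longrightarrow> grass_dist (psi A y) (psi A x) < \<epsilon>"
proof -
  have xA: "x \<in> A" and dk: "dim (TanSpan A x) = k" using x unfolding Tset_def by auto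
  obtain B where B: "B \<subseteq> Tan A x" "independent B" "finite B" "span B = TanSpan A x" "card B = k"
    using tan_basis[of A x] dk by metis
  obtain m where m: "m > 0" "\<And>z. z \<in> span B \<Longrightarrow> m * norm z \<le> (\<Sum>u\<in>B. \<bar>u \<bullet> z\<bar>)"
    using mbound[OF B(3)] by metis
  define \<gamma> where "\<gamma> = min (1/2) (\<epsilon>/4)"
  have \<gamma>: "\<gamma> > 0" "\<gamma> \<le> 1/2" "2 * \<gamma> < \<epsilon>" unfolding \<gamma>_def using \<epsilon> by auto
  define \<theta> where "\<theta> = \<gamma> * m / real k"
  have \<theta>: "\<theta> > 0" unfolding \<theta>_def using \<gamma> m k1 by simp
  have \<theta>\<gamma>: "real (card B) * \<theta> / m = \<gamma>" unfolding \<theta>_def using B(5) k1 m by simp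
  obtain \<delta> where \<delta>: "\<delta> > 0" "\<And>y e. y \<in> A \<Longrightarrow> dist y x < \<delta> \<Longrightarrow> norm e = 1 \<Longrightarrow> (\<forall>l\<in>Tan A y. e \<bullet> l = 0) \<Longrightarrow>
      \<forall>u\<in>B. \<bar>u \<bullet> e\<bar> \<le> \<theta>"
    using core[OF xA B(3) B(1) \<theta>] by metis
  show ?thesis
  proof (intro exI[of _ \<delta>] conjI ballI impI \<delta>(1))
    fix y assume y: "y \<in> Tset A k" "dist y x < \<delta>"
    have yA: "y \<in> A" and dky: "dim (TanSpan A y) = k" using y unfolding Tset_def by auto
    have cb: "\<bar>z \<bullet> e\<bar> \<le> norm z * \<gamma>"
      if "norm e = 1" "\<forall>l\<in>Tan A y. e \<bullet> l = 0" "z \<in> span B" for e z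
      using comp_bound[OF B(3) m(1) m(2) \<delta>(2)[OF yA y(2) that(1,2)] that(3)] \<theta>\<gamma> by simp
    define Ly where "Ly = span (Tan A y)"
    define Lx where "Lx = span B"
    have psiy: "psi A y = Ly" unfolding psi_def TanSpan_def Ly_def ..
    have psix: "psi A x = Lx" unfolding psi_def Lx_def B(4) ..
    have side1: "infdist v Ly \<le> \<gamma>" if v: "v \<in> Lx" "norm v = 1" for v
    proof -
      obtain p q where pq: "p \<in> span (Tan A y)" "\<And>w. w \<in> span (Tan A y) \<Longrightarrow> orthogonal q w" "v = p + q"
        using orthogonal_subspace_decomp_exists by metis
      have "infdist v Ly \<le> dist v p" using pq(1) unfolding Ly_def by (rule infdist_le)
      also have "dist v p = norm q" using pq(3) by (simp add: dist_norm)
      finally have iq: "infdist v Ly \<le> norm q" .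
      show ?thesis
      proof (cases "q = 0")
        case True then show ?thesis using iq \<gamma> by simp
      next
        case False
        define e where "e = (1 / norm q) *\<^sub>R q"
        have e1: "norm e = 1" unfolding e_def using False by simp
        have eo: "\<forall>l\<in>Tan A y. e \<bullet> l = 0"
        proof
          fix l assume "l \<in> Tan A y"
          then have "orthogonal q l" using pq(2) span_base by blast
          then show "e \<bullet> l = 0" unfolding e_def by (simp add: orthogonal_def)
        qed
        have "\<bar>v \<bullet> e\<bar> \<le> norm v * \<gamma>" using cb[OF e1 eo, of v] v unfolding Lx_def by simp
        moreover have "v \<bullet> e = norm q"
        proof -
          have "p \<bullet> q = 0" using pq(2)[OF pq(1)] by (simp add: orthogonal_def inner_commute)
          then have "v \<bullet> q = q \<bullet> q" using pq(3) by (simp add: inner_add_left)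
          then show ?thesis unfolding e_def using False by (simp add: power2_norm_eq_inner[symmetric] power2_eq_square)
        qed
        ultimately show ?thesis using iq v by simp
      qed
    qed
    have side2: "infdist w Lx \<le> 2 * \<gamma>" if w: "w \<in> Ly" "norm w = 1" for w
    proof -
      obtain w1 w2 where ww: "w1 \<in> span B" "\<And>v. v \<in> span B \<Longrightarrow> orthogonal w2 v" "w = w1 + w2"
        using orthogonal_subspace_decomp_exists by metis
      have "infdist w Lx \<le> dist w w1" using ww(1) unfolding Lx_def by (rule infdist_le)
      also have "dist w w1 = norm w2" using ww(3) by (simp add: dist_norm)
      finally have iw: "infdist w Lx \<le> norm w2" .
      show ?thesis
      proof (cases "w2 = 0")
        case True then show ?thesis using iw \<gamma> by simp
      next
        case False
        have w12: "w1 \<bullet> w2 = 0" using ww(2)[OF ww(1)] by (simp add: orthogonal_def inner_commute)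
        have wnB: "w \<notin> span B"
        proof
          assume "w \<in> span B"
          then have "w2 \<in> span B" using ww(1,3) span_diff[of w B w1] by simp
          then have "orthogonal w2 w2" by (rule ww(2))
          then show False using False by (simp add: orthogonal_def)
        qed
        then have "w \<notin> B" using span_base by blast
        have ind: "independent (insert w B)" using wnB B(2) by (rule independent_insertI)
        have "dim (insert w B) = k + 1"
          using dim_eq_card_independent[OF ind] B(3,5) \<open>w \<notin> B\<close> by simp
        moreover have "dim (Tan A y) = k" using dky unfolding TanSpan_def by simp
        ultimately have "dim (Tan A y) < dim (insert w B)" by simp
        then obtain e0 where e0: "e0 \<in> span (insert w B)" "e0 \<noteq> 0" "\<forall>l\<in>Tan A y. e0 \<bullet> l = 0"
          using orth_exists by metis
        define e where "e = (1 / norm e0) *\<^sub>R e0"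
        have e: "norm e = 1" "e \<in> span (insert w B)" "\<forall>l\<in>Tan A y. e \<bullet> l = 0"
          unfolding e_def using e0 by (auto simp: span_mul)
        have ew: "e \<bullet> w = 0"
        proof -
          have "orthogonal e w"
            by (rule orthogonal_to_span[of w "Tan A y" e]) (use w e(3) in \<open>auto simp: Ly_def orthogonal_def\<close>)
          then show ?thesis by (simp add: orthogonal_def)
        qed
        obtain t where t: "e - t *\<^sub>R w \<in> span B" using e(2) span_breakdown_eq by blast
        define a where "a = (e - t *\<^sub>R w) + t *\<^sub>R w1"
        have aB: "a \<in> span B" unfolding a_def using t ww(1) by (simp add: span_add span_mul)
        have ea: "e = a + t *\<^sub>R w2" unfolding a_def using ww(3) by (simp add: algebra_simps)
        have aw2: "a \<bullet> w2 = 0" using ww(2)[OF aB] by (simp add: orthogonal_def inner_commute)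
        have "\<bar>a \<bullet> e\<bar> \<le> norm a * \<gamma>" using cb[OF e(1) e(3) aB] .
        moreover have "a \<bullet> e = a \<bullet> a" unfolding ea using aw2 by (simp add: inner_add_right)
        ultimately have "(norm a)\<^sup>2 \<le> norm a * \<gamma>" by (simp add: power2_norm_eq_inner)
        then have na: "norm a \<le> \<gamma>"
          by (cases "norm a = 0") (use \<gamma> in \<open>auto simp: power2_eq_square\<close>)
        define N where "N = w2 \<bullet> w2"
        have N0: "N \<ge> 0" unfolding N_def by simp
        have one: "1 = a \<bullet> a + t\<^sup>2 * N"
        proof -
          have "e \<bullet> e = 1" using e(1) by (simp add: norm_eq_1)
          then show ?thesis unfolding ea N_def using aw2
            by (simp add: inner_add_left inner_add_right inner_commute power2_eq_square)
        qed
        have zero: "a \<bullet> w1 + t * N = 0"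
        proof -
          have "e \<bullet> w = a \<bullet> w1 + t * N" unfolding ea ww(3) N_def using aw2 w12
            by (simp add: inner_add_left inner_add_right inner_commute)
          then show ?thesis using ew by simp
        qed
        have nw1: "norm w1 \<le> 1"
        proof -
          have "w \<bullet> w = w1 \<bullet> w1 + w2 \<bullet> w2" unfolding ww(3) using w12
            by (simp add: inner_add_left inner_add_right inner_commute)
          moreover have "w \<bullet> w = 1" using w(2) by (simp add: norm_eq_1)
          moreover have "0 \<le> w2 \<bullet> w2" by simp
          ultimately have "w1 \<bullet> w1 \<le> 1" by linarith
          then have "(norm w1)\<^sup>2 \<le> 1\<^sup>2" by (simp add: power2_norm_eq_inner)
          then show ?thesis using power2_le_imp_le[of "norm w1" 1] by simp
        qed
        have "\<bar>a \<bullet> w1\<bar> \<le> norm a * norm w1" by (rule Cauchy_Schwarz_ineq2)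
        also have "\<dots> \<le> \<gamma> * 1" using na nw1 \<gamma> by (intro mult_mono) auto
        finally have tN: "\<bar>t * N\<bar> \<le> \<gamma>" using zero by simp
        have aa: "a \<bullet> a \<le> \<gamma>\<^sup>2" using na by (simp add: power2_norm_eq_inner[symmetric] power_mono)
        have "\<gamma> * \<gamma> \<le> (1/2) * (1/2)" using \<gamma> by (intro mult_mono) auto
        moreover have "t\<^sup>2 * N = 1 - a \<bullet> a" using one by simp
        moreover have "a \<bullet> a \<le> \<gamma> * \<gamma>" using aa by (simp add: power2_eq_square)
        ultimately have t2N: "3/4 \<le> t\<^sup>2 * N" by simp
        have "\<bar>t * N\<bar> * \<bar>t * N\<bar> \<le> \<gamma> * \<gamma>" using tN by (intro mult_mono) auto
        then have P: "(t * N) * (t * N) \<le> \<gamma> * \<gamma>" by (simp add: abs_mult_self)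
        have Q: "(t * N) * (t * N) = (t\<^sup>2 * N) * N" by (simp add: power2_eq_square algebra_simps)
        have R: "(3/4) * N \<le> (t\<^sup>2 * N) * N" using t2N N0 by (intro mult_right_mono) auto
        from R have "(3/4) * N \<le> (t * N) * (t * N)" by (simp only: Q)
        then have "(3/4) * N \<le> \<gamma> * \<gamma>" using P by (rule order_trans)
        then have "3 * N \<le> 4 * (\<gamma> * \<gamma>)" by simp
        moreover have "N \<le> 3 * N" using N0 by simp
        ultimately have "N \<le> 4 * (\<gamma> * \<gamma>)" by (rule order_trans[rotated])
        moreover have "(2 * \<gamma>)\<^sup>2 = 4 * (\<gamma> * \<gamma>)" by (simp add: power2_eq_square)
        ultimately have "N \<le> (2 * \<gamma>)\<^sup>2" by simp
        then have "(norm w2)\<^sup>2 \<le> (2 * \<gamma>)\<^sup>2" unfolding N_def by (simp add: power2_norm_eq_inner)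
        then have "norm w2 \<le> 2 * \<gamma>" by (rule power2_le_imp_le) (use \<gamma> in auto)
        then show ?thesis using iw by simp
      qed
    qed
    have s1: "(SUP u\<in>{u\<in>Ly. norm u = 1}. infdist u Lx) \<le> 2 * \<gamma>"
    proof (rule cSUP_least)
      have "dim (Tan A y) \<ge> 1" using dky k1 unfolding TanSpan_def by simp
      then show "{u \<in> Ly. norm u = 1} \<noteq> {}" using unit_in_span[of "Tan A y"] unfolding Ly_def by blast
      show "infdist u Lx \<le> 2 * \<gamma>" if "u \<in> {u \<in> Ly. norm u = 1}" for u using side2[of u] that by blast
    qed
    have s2: "(SUP v\<in>{v\<in>Lx. norm v = 1}. infdist v Ly) \<le> 2 * \<gamma>"
    proof (rule cSUP_least)
      show "{v \<in> Lx. norm v = 1} \<noteq> {}" using unit_in_span[of B] B(2,5) k1 dim_eq_card_independent[of B]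
        unfolding Lx_def by simp
      show "infdist v Ly \<le> 2 * \<gamma>" if "v \<in> {v \<in> Lx. norm v = 1}" for v using side1[of v] that \<gamma> by simp
    qed
    have "grass_dist Ly Lx \<le> 2 * \<gamma>" unfolding grass_dist_def by (rule max.boundedI[OF s1 s2])
    then show "grass_dist (psi A y) (psi A x) < \<epsilon>" unfolding psiy psix using \<gamma>(3) by linarith
  qed
qed

end


theorem lemma3p3:
  fixes A :: "'a::euclidean_space set" and k :: nat
  assumes "positive_reach A" and "1 \<le> k" and "k \<le> DIM('a)"
  shows "Tset A k \<inter> closure (\<Union>i<k. Tset A i) = {}
    \<and> (\<forall>x\<in>Tset A k. \<forall>e>0. \<exists>\<delta>>0. \<forall>y\<in>Tset A k.
           dist y x < \<delta> \<longrightarrow> grass_dist (psi A y) (psi A x) < e)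
    \<and> closed (Tset A 1)
    \<and> Tset A 0 = {x \<in> A. \<not> x islimpt A}"
proof (cases "A = {}")
  case True
  then have "Tset A j = {}" for j unfolding Tset_def by simp
  then show ?thesis using True by simp
next
  case False
  obtain r where "pr A r" using positive_reach_pr[OF assms(1) False] by blast
  then interpret pr A r .
  show ?thesis
  proof (intro conjI)
    show "Tset A k \<inter> closure (\<Union>i<k. Tset A i) = {}" using part1 by blast
    show "\<forall>x\<in>Tset A k. \<forall>e>0. \<exists>\<delta>>0. \<forall>y\<in>Tset A k.
           dist y x < \<delta> \<longrightarrow> grass_dist (psi A y) (psi A x) < e"
      using part2 assms(2) by blast
    show "closed (Tset A 1)" by (rule part3)
    show "Tset A 0 = {x \<in> A. \<not> x islimpt A}" by (rule tset0)
  qed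
qed

end
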